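(* For every integer $n\ge1$, a series $h\in M$ lies in $S'_{-1,n-1}=\mu(S_{-1}\cap S_{n-1})$ if and only if $z^n=H^{(n)}$; equivalently, under the Lax map, its Lax operator $\mathcal L=\phi(z)$ satisfies $\mathcal L^n=(\mathcal L^n)_+$ (the $n$-th Gelfand–Dickey reduction).
   Context: Let $x$ be a space variable; coefficients are functions of $x$. $M$ is the affine space of formal Laurent series $h(z)=z+\sum_{j\ge1}h_jz^{-j}$, $A$ that of $a(z)=z+\sum_{j\ge0}a_jz^{-j}$, $N=M\times A$, $\mu(h,a)=h$. Faà di Bruno iterates: $h^{(0)}=1$, $h^{(j+1)}=\partial_xh^{(j)}+h\,h^{(j)}$ for $j\in\mathbb Z$ (negative ones by backward recursion). For $j\ge0$ the KP current $H^{(j)}$ is the unique series $h^{(j)}+\sum_{l=0}^{j-2}p^j_l[h]h^{(l)}$ ($p^j_l$ differential polynomials in the $h_i$) with $H^{(j)}=z^j+O(z^{-1})$. For $l\ge-1$, $S_l\subset N$ is defined by $z^la=H^{(l+1)}+\sum_{m=0}^{l}a_mH^{(l-m)}$ (empty sum for $l=-1$, so $S_{-1}=\{a=z\}$). The Lax map $\phi$ is the linear map from Laurent series to pseudodifferential operators with $\phi(f h^{(j)})=f\partial_x^j$ for $z$-independent $f$; $\mathcal L=\phi(z)$, and $(\cdot)_+$ denotes the differential part of a pseudodifferential operator. It is known that $\phi(H^{(j)})=(\mathcal L^j)_+$ and $\phi(z^kh^{(j)})=\partial_x^j\mathcal L^k$. *)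

theory Defs
  imports "HOL-Computational_Algebra.Formal_Laurent_Series"
begin

(* Coefficient ring ("functions of x"): a commutative ring of characteristic 0
   with a derivation D standing for d/dx. *)
definition is_derivation :: "('a::comm_ring_1 \<Rightarrow> 'a) \<Rightarrow> bool" where
  "is_derivation D \<longleftrightarrow> (\<forall>a b. D (a + b) = D a + D b) \<and> (\<forall>a b. D (a * b) = D a * b + a * D b)"

(* Laurent series in z with finitely many positive powers of z are modelled as
   'a fls in the variable X = z^-1:  the coefficient of z^m is  f $$ (-m). *)
definition zcoeff :: "'a::zero fls \<Rightarrow> int \<Rightarrow> 'a" where
  "zcoeff f m = fls_nth f (- m)"

definition zpow :: "int \<Rightarrow> 'a::{zero,one} fls" where
  "zpow k = fls_shift k 1"

definition dx :: "('a::comm_ring_1 \<Rightarrow> 'a) \<Rightarrow> 'a fls \<Rightarrow> 'a fls" where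
  "dx D f = Abs_fls (\<lambda>m. D (fls_nth f m))"

definition inM :: "'a::comm_ring_1 fls \<Rightarrow> bool" where
  "inM h \<longleftrightarrow> (\<forall>m::int. m \<ge> 0 \<longrightarrow> zcoeff h m = (if m = 1 then 1 else 0))"

definition inA :: "'a::comm_ring_1 fls \<Rightarrow> bool" where
  "inA a \<longleftrightarrow> (\<forall>m::int. m \<ge> 1 \<longrightarrow> zcoeff a m = (if m = 1 then 1 else 0))"

definition acoef :: "'a::comm_ring_1 fls \<Rightarrow> int \<Rightarrow> 'a" where
  "acoef a j = zcoeff a (- j)"

(* Faa di Bruno iterates h^(j), j in Z: h^(0) = 1, h^(j+1) = dx h^(j) + h h^(j)
   (negative indices determined by backward recursion, i.e. by uniqueness). *)
definition fdb :: "('a::comm_ring_1 \<Rightarrow> 'a) \<Rightarrow> 'a fls \<Rightarrow> int \<Rightarrow> 'a fls" where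
  "fdb D h = (THE F. F 0 = 1 \<and> (\<forall>j. F (j + 1) = dx D (F j) + h * F j))"

definition Hcur :: "('a::comm_ring_1 \<Rightarrow> 'a) \<Rightarrow> 'a fls \<Rightarrow> nat \<Rightarrow> 'a fls" where
  "Hcur D h j = (THE G. (\<exists>c::nat \<Rightarrow> 'a.
        G = fdb D h (int j) + (\<Sum>l<j - 1. fls_const (c l) * fdb D h (int l))) \<and>
      (\<forall>m::int. m \<ge> 0 \<longrightarrow> zcoeff G m = (if m = int j then 1 else 0)))"

definition Sset :: "('a::comm_ring_1 \<Rightarrow> 'a) \<Rightarrow> int \<Rightarrow> ('a fls \<times> 'a fls) set" where
  "Sset D l = {(h, a). inM h \<and> inA a \<and>
     zpow l * a = Hcur D h (nat (l + 1)) + (\<Sum>m\<in>{0..l}. fls_const (acoef a m) * Hcur D h (nat (l - m)))}"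

definition Sprime :: "('a::comm_ring_1 \<Rightarrow> 'a) \<Rightarrow> int \<Rightarrow> int \<Rightarrow> 'a fls set" where
  "Sprime D l1 l2 = fst ` (Sset D l1 \<inter> Sset D l2)"

(* Pseudodifferential operators sum_{k <= N} P_k \<partial>^k, modelled as 'a fls
   with the coefficient of \<partial>^k equal to P $$ (-k). *)
definition pdcoeff :: "'a::zero fls \<Rightarrow> int \<Rightarrow> 'a" where
  "pdcoeff P k = fls_nth P (- k)"

(* generalized binomial coefficient binom(k,i) = k(k-1)...(k-i+1)/i! for integer k
   (the division is exact) *)
definition ibinom :: "int \<Rightarrow> nat \<Rightarrow> int" where
  "ibinom k i = (\<Prod>j<i. k - int j) div fact i"

(* composition: \<partial>^k f = sum_{i>=0} binom(k,i) (D^i f) \<partial>^(k-i) *)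
definition pd_mult :: "('a::comm_ring_1 \<Rightarrow> 'a) \<Rightarrow> 'a fls \<Rightarrow> 'a fls \<Rightarrow> 'a fls" where
  "pd_mult D P Q = Abs_fls (\<lambda>r::int.
     (\<Sum>p \<in> {p :: int \<times> nat. pdcoeff P (fst p) \<noteq> 0 \<and> pdcoeff Q (- r - fst p + int (snd p)) \<noteq> 0}.
        pdcoeff P (fst p) * of_int (ibinom (fst p) (snd p)) *
          (D ^^ snd p) (pdcoeff Q (- r - fst p + int (snd p)))))"

definition pd_pow :: "('a::comm_ring_1 \<Rightarrow> 'a) \<Rightarrow> 'a fls \<Rightarrow> nat \<Rightarrow> 'a fls" where
  "pd_pow D P n = (pd_mult D P ^^ n) 1"

definition pd_plus :: "'a::zero fls \<Rightarrow> 'a fls" where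
  "pd_plus P = Abs_fls (\<lambda>r. if r \<le> 0 then fls_nth P r else 0)"

(* Lax map phi: phi(f) = P  iff  f = sum_j P_j h^(j).  Since h^(j) = z^j + lower
   order terms, only indices j >= m contribute to the coefficient of z^m. *)
definition lax :: "('a::comm_ring_1 \<Rightarrow> 'a) \<Rightarrow> 'a fls \<Rightarrow> 'a fls \<Rightarrow> 'a fls" where
  "lax D h f = (THE P. \<forall>m::int. zcoeff f m =
      (\<Sum>j\<in>{j. m \<le> j \<and> pdcoeff P j \<noteq> 0}. pdcoeff P j * zcoeff (fdb D h j) m))"

definition LaxOp :: "('a::comm_ring_1 \<Rightarrow> 'a) \<Rightarrow> 'a fls \<Rightarrow> 'a fls" where
  "LaxOp D h = lax D h (zpow 1)"

end

theory Submission
  imports Defs "HOL-Library.Groups_Big_Fun"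
begin
unbundle fps_syntax


definition lb :: "'a::zero fls \<Rightarrow> int \<Rightarrow> bool" where
  "lb f N \<longleftrightarrow> (\<forall>k<N. f $$ k = 0)"

lemma Abs_fls_nth:
  assumes "\<forall>k<N. g k = 0"
  shows "Abs_fls g $$ k = g k"
proof -
  have "\<forall>\<^sub>\<infinity> n::nat. g (- int n) = 0"
    unfolding MOST_nat
    by (rule exI[of _ "nat (-N)"]) (use assms in auto)
  then show ?thesis by (simp add: Abs_fls_inverse)
qed

lemma lb_subdeg: "lb f (fls_subdegree f)"
  unfolding lb_def by simp

lemma lb_mono: "lb f N \<Longrightarrow> M \<le> N \<Longrightarrow> lb f M"
  unfolding lb_def by auto

lemma prod_nth:
  fixes f g :: "'a::comm_ring_1 fls"
  assumes "lb f a" "lb g b"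
  shows "(f*g) $$ n = (\<Sum>i\<in>{a..n-b}. f $$ i * g $$ (n-i))"
proof (cases "f = 0 \<or> g = 0")
  case True then show ?thesis by auto
next
  case False
  hence f0: "f \<noteq> 0" and g0: "g \<noteq> 0" by auto
  have sa: "a \<le> fls_subdegree f"
    using assms(1) f0 unfolding lb_def by (meson fls_subdegree_geI)
  have sb: "b \<le> fls_subdegree g"
    using assms(2) g0 unfolding lb_def by (meson fls_subdegree_geI)
  have "(f*g) $$ n = (\<Sum>i\<in>{fls_subdegree f..n - fls_subdegree g}. f $$ i * g $$ (n-i))"
    by (rule fls_times_nth(2))
  also have "\<dots> = (\<Sum>i\<in>{a..n-b}. f $$ i * g $$ (n-i))"
  proof (rule sum.mono_neutral_left)
    show "\<forall>i\<in>{a..n - b} - {fls_subdegree f..n - fls_subdegree g}. f $$ i * g $$ (n - i) = 0"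
    proof
      fix i assume "i \<in> {a..n - b} - {fls_subdegree f..n - fls_subdegree g}"
      hence "i < fls_subdegree f \<or> n - i < fls_subdegree g" by auto
      thus "f $$ i * g $$ (n - i) = 0" by auto
    qed
  qed (use sa sb in auto)
  finally show ?thesis .
qed

lemma zpow_nth: "zpow a $$ k = (if k = -a then 1 else 0)"
  unfolding zpow_def by simp

lemma lb_zpow: "lb (zpow a) (-a)"
  unfolding lb_def zpow_nth by auto

lemma zpow_mult: "zpow a * (f :: 'a::comm_ring_1 fls) = fls_shift a f"
proof (rule fls_eqI)
  fix n
  have "(zpow a * f) $$ n = (\<Sum>i\<in>{-a..n-fls_subdegree f}. zpow a $$ i * f $$ (n-i))"
    by (rule prod_nth[OF lb_zpow lb_subdeg])
  also have "\<dots> = f $$ (n + a)"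
  proof (cases "-a \<le> n - fls_subdegree f")
    case True
    have "(\<Sum>i\<in>{-a..n-fls_subdegree f}. zpow a $$ i * f $$ (n-i)) = (\<Sum>i\<in>{-a..n-fls_subdegree f}. if i = -a then f $$ (n-i) else 0)"
      by (rule sum.cong) (auto simp: zpow_nth)
    then show ?thesis using True by simp
  next
    case False
    then show ?thesis by simp
  qed
  finally show "(zpow a * f) $$ n = fls_shift a f $$ n" by simp
qed

lemma zpow_add: "zpow (a + b) = (zpow a * zpow b :: 'a::comm_ring_1 fls)"
  by (rule fls_eqI) (simp add: zpow_mult zpow_nth algebra_simps)

locale kp =
  fixes D :: "'a::comm_ring_1 \<Rightarrow> 'a" and h :: "'a fls"
  assumes der: "is_derivation D" and hM: "inM h"
begin

lemma D_add: "D (a + b) = D a + D b" using der unfolding is_derivation_def by auto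
lemma D_mult: "D (a * b) = D a * b + a * D b" using der unfolding is_derivation_def by auto
lemma D0[simp]: "D 0 = 0" using D_add[of 0 0] by simp
lemma D1[simp]: "D 1 = 0" using D_mult[of 1 1] by simp
lemma D_uminus: "D (- a) = - D a" using D_add[of a "-a"] by (simp add: eq_neg_iff_add_eq_0 add.commute)
lemma D_diff: "D (a - b) = D a - D b" using D_add[of a "-b"] D_uminus by simp
lemma D_sum: "D (sum f S) = (\<Sum>x\<in>S. D (f x))"
  by (induction S rule: infinite_finite_induct) (auto simp: D_add)
lemma D_of_int[simp]: "D (of_int c) = 0"
proof (induction c rule: int_induct[where k=0])
  case base then show ?case by simp
next
  case (step1 i) then show ?case by (simp add: D_add)
next
  case (step2 i) then show ?case by (simp add: D_diff)
qed
lemma D_of_int_mult: "D (of_int c * a) = of_int c * D a" by (simp add: D_mult)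
lemma Dpow0[simp]: "(D ^^ i) 0 = 0" by (induction i) auto

lemma dx_nth[simp]: "dx D f $$ k = D (f $$ k)"
proof -
  have "dx D f $$ k = (\<lambda>m. D (f $$ m)) k"
    unfolding dx_def
    by (rule Abs_fls_nth[of "fls_subdegree f"]) auto
  thus ?thesis by simp
qed

lemma h_nth: "k \<le> 0 \<Longrightarrow> h $$ k = (if k = -1 then 1 else 0)"
  using hM unfolding inM_def zcoeff_def by (metis minus_minus neg_0_le_iff_le)

lemma lb_h: "lb h (-1)"
  unfolding lb_def using h_nth by auto

end


context kp begin

definition T :: "'a fls \<Rightarrow> 'a fls" where "T f = dx D f + h * f"

lemma hmult_nth:
  assumes "lb f N"
  shows "(h*f) $$ k = f $$ (k+1) + (\<Sum>t\<in>{1..k-N}. h $$ t * f $$ (k-t))"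
proof -
  have e: "(h*f) $$ k = (\<Sum>t\<in>{-1..k-N}. h $$ t * f $$ (k-t))"
    using prod_nth[OF lb_h assms] by simp
  consider "k < N - 1" | "k = N - 1" | "k \<ge> N" by linarith
  then show ?thesis
  proof cases
    case 1
    then show ?thesis using assms e unfolding lb_def by simp
  next
    case 2
    then show ?thesis using e h_nth[of "-1"] by simp
  next
    case 3
    have "{-1..k-N} = {-1, 0} \<union> {1..k-N}" using 3 by auto
    hence "(\<Sum>t\<in>{-1..k-N}. h $$ t * f $$ (k-t)) = (\<Sum>t\<in>{-1,0}. h $$ t * f $$ (k-t)) + (\<Sum>t\<in>{1..k-N}. h $$ t * f $$ (k-t))"
      by (simp add: sum.union_disjoint)
    then show ?thesis using e h_nth[of "-1"] h_nth[of 0] by simp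
  qed
qed

lemma T_nth:
  assumes "lb f N"
  shows "T f $$ k = D (f $$ k) + f $$ (k+1) + (\<Sum>t\<in>{1..k-N}. h $$ t * f $$ (k-t))"
  unfolding T_def using hmult_nth[OF assms] by simp

lemma dx_add: "dx D (f + g) = dx D f + dx D g"
  by (rule fls_eqI) (simp add: D_add)
lemma dx_diff: "dx D (f - g) = dx D f - dx D g"
  by (rule fls_eqI) (simp add: D_diff)
lemma dx_const: "dx D (fls_const c * f) = fls_const (D c) * f + fls_const c * dx D f"
  by (rule fls_eqI) (simp add: D_mult)
lemma dx_shift: "dx D (fls_shift a f) = fls_shift a (dx D f)"
  by (rule fls_eqI) simp

lemma T_add: "T (f + g) = T f + T g"
  unfolding T_def dx_add by (simp add: algebra_simps)
lemma T_diff: "T (f - g) = T f - T g"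
  unfolding T_def dx_diff by (simp add: algebra_simps)
lemma T_0[simp]: "T 0 = 0"
  using T_diff[of 0 0] by simp
lemma T_const: "T (fls_const c * f) = fls_const (D c) * f + fls_const c * T f"
  unfolding T_def dx_const by (simp add: algebra_simps)
lemma T_zpow: "T (zpow a * f) = zpow a * T f"
  unfolding T_def zpow_mult dx_shift
  by (simp add: zpow_mult[symmetric] algebra_simps)

lemma T_lb_fwd:
  assumes "lb f N"
  shows "lb (T f) (N - 1)" "T f $$ (N - 1) = f $$ N"
proof -
  show "lb (T f) (N - 1)" unfolding lb_def
  proof (intro allI impI)
    fix k assume "k < N - 1"
    then show "T f $$ k = 0" using T_nth[OF assms, of k] assms unfolding lb_def by simp
  qed
  show "T f $$ (N - 1) = f $$ N" using T_nth[OF assms, of "N-1"] assms unfolding lb_def by simp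
qed

lemma T_eq0: "T f = 0 \<Longrightarrow> f = 0"
proof (rule ccontr)
  assume a: "T f = 0" "f \<noteq> 0"
  have "T f $$ (fls_subdegree f - 1) = f $$ fls_subdegree f"
    by (rule T_lb_fwd(2)[OF lb_subdeg])
  then show False using a by simp
qed

lemma T_inj: "T f = T g \<Longrightarrow> f = g"
  using T_eq0[of "f - g"] T_diff[of f g] by simp

lemma T_lb_back:
  assumes "T f = g" "lb g N"
  shows "lb f (N + 1)"
proof (cases "f = 0")
  case True then show ?thesis unfolding lb_def by simp
next
  case False
  show ?thesis
  proof (rule ccontr)
    assume "\<not> lb f (N + 1)"
    then obtain k where k: "k < N + 1" "f $$ k \<noteq> 0" unfolding lb_def by auto
    have "fls_subdegree f \<le> k" by (rule fls_subdegree_leI[OF k(2)])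
    have "T f $$ (fls_subdegree f - 1) = f $$ fls_subdegree f"
      by (rule T_lb_fwd(2)[OF lb_subdeg])
    moreover have "g $$ (fls_subdegree f - 1) = 0"
      using assms(2) \<open>fls_subdegree f \<le> k\<close> k(1) unfolding lb_def by simp
    ultimately show False using False assms(1) by simp
  qed
qed

end


function tsol :: "(int \<Rightarrow> (int \<Rightarrow> 'a) \<Rightarrow> 'a) \<Rightarrow> (int \<Rightarrow> 'a::ab_group_add) \<Rightarrow> int \<Rightarrow> int \<Rightarrow> 'a" where
  "tsol R g N k = (if k < N then 0 else g k - R k (\<lambda>i. if N \<le> i \<and> i < k then tsol R g N i else 0))"
  by pat_completeness auto
termination by (relation "measure (\<lambda>(R,g,N,k). nat (k - N))") auto

declare tsol.simps[simp del]

lemma tri_solve: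
  fixes R :: "int \<Rightarrow> (int \<Rightarrow> 'a::ab_group_add) \<Rightarrow> 'a"
  assumes loc: "\<And>k f f'. (\<forall>i<k. f i = f' i) \<Longrightarrow> R k f = R k f'"
    and zer: "\<And>k f. (\<forall>i<k. f i = 0) \<Longrightarrow> R k f = 0"
    and g: "\<forall>k<N. g k = 0"
  shows "\<exists>f. (\<forall>k<N. f k = 0) \<and> (\<forall>k. f k + R k f = g k)"
proof (intro exI conjI allI impI)
  let ?f = "tsol R g N"
  show "?f k = 0" if "k < N" for k using that by (simp add: tsol.simps)
  show "?f k + R k ?f = g k" for k
  proof (cases "k < N")
    case True
    have "R k ?f = 0" by (rule zer) (use True in \<open>auto simp: tsol.simps\<close>)
    then show ?thesis using True g by (simp add: tsol.simps)
  next
    case False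
    have "R k (\<lambda>i. if N \<le> i \<and> i < k then ?f i else 0) = R k ?f"
      by (rule loc) (auto simp: tsol.simps)
    then show ?thesis using False by (subst (1) tsol.simps) simp
  qed
qed

context kp begin

lemma T_surj: "\<exists>f. T f = g"
proof -
  define N where "N = fls_subdegree g"
  define R where "R = (\<lambda>k (e::int\<Rightarrow>'a). D (e (k-1)) + (\<Sum>t\<in>{1..k-1-N}. h $$ t * e (k-1-t)))"
  have "\<exists>e. (\<forall>k<N. e k = 0) \<and> (\<forall>k. e k + R k e = g $$ k)"
  proof (rule tri_solve)
    show "R k f = R k f'" if "\<forall>i<k. f i = f' i" for k f f'
      unfolding R_def using that by (auto intro!: sum.cong)
    show "R k f = 0" if "\<forall>i<k. f i = 0" for k f
      unfolding R_def using that by (auto intro!: sum.neutral)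
    show "\<forall>k<N. g $$ k = 0" unfolding N_def by simp
  qed
  then obtain e where e0: "\<forall>k<N. e k = 0" and e: "\<forall>k. e k + R k e = g $$ k" by blast
  define f where "f = Abs_fls (\<lambda>k. e (k - 1))"
  have fn: "f $$ k = e (k - 1)" for k
    unfolding f_def by (rule Abs_fls_nth[of "N+1"]) (use e0 in auto)
  have lbf: "lb f (N + 1)" unfolding lb_def fn using e0 by auto
  have "T f = g"
  proof (rule fls_eqI)
    fix k
    have "T f $$ k = D (e (k-1)) + e k + (\<Sum>t\<in>{1..k-(N+1)}. h $$ t * e (k-t-1))"
      using T_nth[OF lbf, of k] by (simp add: fn)
    also have "\<dots> = e k + R k e" unfolding R_def by (simp add: algebra_simps)
    also have "\<dots> = g $$ k" using e by simp
    finally show "T f $$ k = g $$ k" .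
  qed
  then show ?thesis by blast
qed

definition Tinv where "Tinv g = (SOME f. T f = g)"
lemma T_Tinv[simp]: "T (Tinv g) = g"
  unfolding Tinv_def by (rule someI_ex[OF T_surj])

definition Fd :: "int \<Rightarrow> 'a fls" where
  "Fd j = (if 0 \<le> j then (T ^^ nat j) 1 else (Tinv ^^ nat (-j)) 1)"

lemma Fd0: "Fd 0 = 1" by (simp add: Fd_def)
lemma Fd_step: "Fd (j + 1) = T (Fd j)"
proof -
  consider "0 \<le> j" | "j = -1" | "j < -1" by linarith
  then show ?thesis
  proof cases
    case 1
    then have "nat (j+1) = Suc (nat j)" by simp
    then show ?thesis using 1 by (simp add: Fd_def)
  next
    case 2
    then show ?thesis by (simp add: Fd_def)
  next
    case 3
    then have "nat (-j) = Suc (nat (-(j+1)))" by simp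
    then show ?thesis using 3 by (simp add: Fd_def)
  qed
qed

lemma fdb_eq: "fdb D h = Fd"
  unfolding fdb_def
proof (rule the_equality)
  show "Fd 0 = 1 \<and> (\<forall>j. Fd (j + 1) = dx D (Fd j) + h * Fd j)"
    using Fd0 Fd_step by (simp add: T_def)
next
  fix F :: "int \<Rightarrow> 'a fls" assume a: "F 0 = 1 \<and> (\<forall>j. F (j + 1) = dx D (F j) + h * F j)"
  hence st: "F (j + 1) = T (F j)" for j by (simp add: T_def)
  show "F = Fd"
  proof
    fix j show "F j = Fd j"
    proof (induction j rule: int_induct[where k=0])
      case base then show ?case using a Fd0 by simp
    next
      case (step1 i) then show ?case using st Fd_step by simp
    next
      case (step2 i)
      have "T (F (i - 1)) = T (Fd (i - 1))"
        using st[of "i-1"] Fd_step[of "i-1"] step2 by simp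
      then show ?case by (rule T_inj)
    qed
  qed
qed

lemma fdb_0: "fdb D h 0 = 1" by (simp add: fdb_eq Fd0)
lemma fdb_step: "fdb D h (j + 1) = T (fdb D h j)" by (simp add: fdb_eq Fd_step)

lemma fdb_props: "lb (fdb D h j) (-j) \<and> fdb D h j $$ (-j) = 1 \<and> fdb D h j $$ (1-j) = 0"
proof (induction j rule: int_induct[where k=0])
  case base then show ?case by (simp add: fdb_0 lb_def)
next
  case (step1 i)
  let ?f = "fdb D h i"
  have l: "lb ?f (-i)" and a: "?f $$ (-i) = 1" and b: "?f $$ (1-i) = 0" using step1 by auto
  have "lb (T ?f) (-i-1)" "T ?f $$ (-i-1) = 1" using T_lb_fwd[OF l] a by auto
  moreover have "T ?f $$ (-i) = 0" using T_nth[OF l, of "-i"] a b by simp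
  moreover have e1: "-(i+1) = -i-1" "1-(i+1) = -i" by simp_all
  ultimately show ?case unfolding fdb_step[of i] e1 by blast
next
  case (step2 i)
  let ?f = "fdb D h (i - 1)"
  have g: "T ?f = fdb D h i" using fdb_step[of "i-1"] by simp
  have l: "lb (fdb D h i) (-i)" and a: "fdb D h i $$ (-i) = 1" and b: "fdb D h i $$ (1-i) = 0"
    using step2 by auto
  have lf: "lb ?f (1-i)" using T_lb_back[OF g l] by simp
  have "T ?f $$ (-i) = ?f $$ (1 - i)" using T_nth[OF lf, of "-i"] lf unfolding lb_def by simp
  hence a': "?f $$ (1-i) = 1" using a g by simp
  have "T ?f $$ (1-i) = ?f $$ (2 - i)" using T_nth[OF lf, of "1-i"] a' by simp
  hence b': "?f $$ (2-i) = 0" using b g by simp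
  show ?case using lf a' b' by (simp add: algebra_simps)
qed

lemma lb_fdb: "lb (fdb D h j) (-j)" using fdb_props by blast
lemma fdb_lead: "fdb D h j $$ (-j) = 1" using fdb_props by blast
lemma fdb_sub: "fdb D h j $$ (1-j) = 0" using fdb_props by blast
lemma fdb_low: "K < -j \<Longrightarrow> fdb D h j $$ K = 0" using lb_fdb unfolding lb_def by blast

end


lemma SA_box: "finite A \<Longrightarrow> (\<And>x. x \<notin> A \<Longrightarrow> g x = 0) \<Longrightarrow> Sum_any g = sum g A"
  by (rule Sum_any.expand_superset) auto

context kp begin

abbreviation "F \<equiv> fdb D h"

definition phi :: "'a fls \<Rightarrow> 'a fls" where
  "phi P = Abs_fls (\<lambda>K. Sum_any (\<lambda>j. P $$ (-j) * F j $$ K))"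

lemma phi_nth: "phi P $$ K = Sum_any (\<lambda>j. P $$ (-j) * F j $$ K)"
proof -
  have "phi P $$ K = (\<lambda>K. Sum_any (\<lambda>j. P $$ (-j) * F j $$ K)) K"
    unfolding phi_def
  proof (rule Abs_fls_nth[of "fls_subdegree P"], intro allI impI)
    fix k assume k: "k < fls_subdegree P"
    have "P $$ (-j) * F j $$ k = 0" for j
    proof (cases "k < -j")
      case True then show ?thesis by (simp add: fdb_low)
    next
      case False then show ?thesis using k by simp
    qed
    then show "Sum_any (\<lambda>j. P $$ (-j) * F j $$ k) = 0" by simp
  qed
  then show ?thesis by simp
qed

lemma phi_box:
  assumes "\<forall>j>J. P $$ (-j) = 0"
  shows "phi P $$ K = (\<Sum>j\<in>{-K..J}. P $$ (-j) * F j $$ K)"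
  unfolding phi_nth
proof (rule SA_box)
  fix j assume "j \<notin> {-K..J}"
  then show "P $$ (-j) * F j $$ K = 0" using assms by (auto simp: fdb_low)
qed simp

lemma ord_bound: "\<forall>j > - fls_subdegree P. P $$ (-j) = 0" by simp

lemma phi_diff: "phi (P - Q) = phi P - phi Q"
proof (rule fls_eqI)
  fix K
  define J where "J = max (- fls_subdegree P) (- fls_subdegree Q)"
  have a: "\<forall>j>J. P $$ (-j) = 0" "\<forall>j>J. Q $$ (-j) = 0" "\<forall>j>J. (P - Q) $$ (-j) = 0"
    unfolding J_def by auto
  show "phi (P - Q) $$ K = (phi P - phi Q) $$ K"
    by (simp add: phi_box[OF a(1)] phi_box[OF a(2)] phi_box[OF a(3)] sum_subtractf algebra_simps)
qed

lemma phi_eq0: "phi P = 0 \<Longrightarrow> P = 0"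
proof (rule ccontr)
  assume a: "phi P = 0" "P \<noteq> 0"
  let ?s = "fls_subdegree P"
  have "phi P $$ ?s = (\<Sum>j\<in>{-?s..-?s}. P $$ (-j) * F j $$ ?s)"
    by (rule phi_box[OF ord_bound])
  also have "\<dots> = P $$ ?s" using fdb_lead[of "-?s"] by simp
  finally show False using a by simp
qed

lemma phi_inj: "phi P = phi Q \<Longrightarrow> P = Q"
  using phi_eq0[of "P - Q"] phi_diff[of P Q] by simp

lemma phi_surj: "\<exists>P. phi P = f"
proof -
  define N where "N = fls_subdegree f"
  define R where "R = (\<lambda>K (p::int\<Rightarrow>'a). (\<Sum>i\<in>{N..K-1}. p i * F (-i) $$ K))"
  have "\<exists>p. (\<forall>k<N. p k = 0) \<and> (\<forall>k. p k + R k p = f $$ k)"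
  proof (rule tri_solve)
    show "R k g = R k g'" if "\<forall>i<k. g i = g' i" for k g g'
      unfolding R_def using that by (auto intro!: sum.cong)
    show "R k g = 0" if "\<forall>i<k. g i = 0" for k g
      unfolding R_def using that by (auto intro!: sum.neutral)
    show "\<forall>k<N. f $$ k = 0" unfolding N_def by simp
  qed
  then obtain p where p0: "\<forall>k<N. p k = 0" and p: "\<forall>k. p k + R k p = f $$ k" by blast
  define P where "P = Abs_fls p"
  have Pn: "P $$ k = p k" for k unfolding P_def by (rule Abs_fls_nth[of N]) (use p0 in auto)
  have "phi P = f"
  proof (rule fls_eqI)
    fix K
    have b: "\<forall>j>-N. P $$ (-j) = 0" using p0 Pn by auto
    have "phi P $$ K = (\<Sum>j\<in>{-K..-N}. p (-j) * F j $$ K)" using phi_box[OF b] Pn by simp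
    also have "\<dots> = (\<Sum>i\<in>{N..K}. p i * F (-i) $$ K)"
      by (rule sum.reindex_bij_witness[of _ uminus uminus]) auto
    also have "\<dots> = f $$ K"
    proof (cases "N \<le> K")
      case True
      have "{N..K} = insert K {N..K-1}" using True by auto
      hence "(\<Sum>i\<in>{N..K}. p i * F (-i) $$ K) = p K * F (-K) $$ K + R K p"
        unfolding R_def by simp
      then show ?thesis using p fdb_lead[of "-K"] by simp
    next
      case False
      then show ?thesis unfolding N_def by simp
    qed
    finally show "phi P $$ K = f $$ K" .
  qed
  then show ?thesis by blast
qed

lemma lax_phi: "lax D h f = P \<longleftrightarrow> phi P = f"
proof -
  have eq: "(\<forall>m. zcoeff f m = (\<Sum>j\<in>{j. m \<le> j \<and> pdcoeff P j \<noteq> 0}. pdcoeff P j * zcoeff (F j) m))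
       \<longleftrightarrow> phi P = f" for P
  proof -
    have s: "(\<Sum>j\<in>{j. m \<le> j \<and> pdcoeff P j \<noteq> 0}. pdcoeff P j * F j $$ (-m)) = phi P $$ (-m)" for m
    proof -
      have fin: "finite {j. m \<le> j \<and> pdcoeff P j \<noteq> 0}"
        proof (rule finite_subset[of _ "{m..-fls_subdegree P}"])
        show "{j. m \<le> j \<and> pdcoeff P j \<noteq> 0} \<subseteq> {m..- fls_subdegree P}"
        proof
          fix x assume "x \<in> {j. m \<le> j \<and> pdcoeff P j \<noteq> 0}"
          hence "m \<le> x" "P $$ (-x) \<noteq> 0" by (auto simp: pdcoeff_def)
          thus "x \<in> {m..- fls_subdegree P}" using fls_subdegree_leI[of P "-x"] by auto
        qed
      qed simp
      have "phi P $$ (-m) = (\<Sum>j\<in>{j. m \<le> j \<and> pdcoeff P j \<noteq> 0}. P $$ (-j) * F j $$ (-m))"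
        unfolding phi_nth
        by (rule SA_box[OF fin]) (auto simp: pdcoeff_def fdb_low)
      thus ?thesis by (simp add: pdcoeff_def zcoeff_def)
    qed
    have "(\<forall>m. f $$ (- m) = phi P $$ (- m)) \<longleftrightarrow> phi P = f"
    proof
      assume a: "\<forall>m. f $$ (- m) = phi P $$ (- m)"
      show "phi P = f"
      proof (rule fls_eqI)
        fix K show "phi P $$ K = f $$ K" using a[rule_format, of "-K"] by simp
      qed
    qed simp
    thus ?thesis unfolding zcoeff_def s .
  qed
  have ex1: "\<exists>!P. phi P = f" using phi_surj phi_inj by blast
  show ?thesis unfolding lax_def eq
  proof
    assume "(THE P. phi P = f) = P"
    thus "phi P = f" using theI'[OF ex1] by simp
  next
    assume "phi P = f"
    thus "(THE P. phi P = f) = P" using ex1 by (intro the1_equality) auto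
  qed
qed

definition "L = LaxOp D h"
lemma phi_L: "phi L = zpow 1"
  unfolding L_def LaxOp_def using lax_phi by blast

lemma phi_lead:
  assumes "phi P = zpow (int n)"
  shows "lb P (- int n)" "P $$ (- int n) = 1" "P $$ (1 - int n) = 0"
proof -
  have P0: "P \<noteq> 0"
  proof
    assume "P = 0"
    hence "phi P $$ (- int n) = 0" by (simp add: phi_nth)
    thus False using assms by (simp add: zpow_nth)
  qed
  let ?s = "fls_subdegree P"
  have "phi P $$ ?s = (\<Sum>j\<in>{-?s..-?s}. P $$ (-j) * F j $$ ?s)"
    by (rule phi_box[OF ord_bound])
  also have "\<dots> = P $$ ?s" using fdb_lead[of "-?s"] by simp
  finally have "phi P $$ ?s \<noteq> 0" using P0 by simp
  hence s: "?s = - int n" using assms by (simp add: zpow_nth split: if_splits)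
  show lbP: "lb P (- int n)" using s lb_subdeg by metis
  have "phi P $$ (- int n) = P $$ (- int n)"
    using phi_box[OF ord_bound, of P "- int n"] fdb_lead[of "int n"] s by simp
  thus "P $$ (- int n) = 1" using assms by (simp add: zpow_nth)
  have "{int n - 1..int n} = {int n - 1, int n}" by auto
  hence "phi P $$ (1 - int n) = P $$ (1 - int n) * F (int n - 1) $$ (1 - int n) + P $$ (- int n) * F (int n) $$ (1 - int n)"
    using phi_box[OF ord_bound, of P "1 - int n"] s by simp
  also have "\<dots> = P $$ (1 - int n)"
    using fdb_lead[of "int n - 1"] fdb_sub[of "int n"] by simp
  finally show "P $$ (1 - int n) = 0" using assms by (simp add: zpow_nth)
qed

lemma Hcur_unique:
  assumes "\<exists>c::nat \<Rightarrow> 'a. G = F (int n) + (\<Sum>l<n - 1. fls_const (c l) * F (int l))"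
    and "\<forall>m::int. m \<ge> 0 \<longrightarrow> zcoeff G m = (if m = int n then 1 else 0)"
  shows "Hcur D h n = G"
  unfolding Hcur_def
proof (rule the_equality)
  show "(\<exists>c::nat \<Rightarrow> 'a. G = F (int n) + (\<Sum>l<n - 1. fls_const (c l) * F (int l))) \<and>
    (\<forall>m::int. m \<ge> 0 \<longrightarrow> zcoeff G m = (if m = int n then 1 else 0))" using assms by blast
next
  fix G' assume a: "(\<exists>c::nat \<Rightarrow> 'a. G' = F (int n) + (\<Sum>l<n - 1. fls_const (c l) * F (int l))) \<and>
    (\<forall>m::int. m \<ge> 0 \<longrightarrow> zcoeff G' m = (if m = int n then 1 else 0))"
  obtain c1 where c1: "G = F (int n) + (\<Sum>l<n - 1. fls_const (c1 l) * F (int l))" using assms by blast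
  obtain c2 where c2: "G' = F (int n) + (\<Sum>l<n - 1. fls_const (c2 l) * F (int l))" using a by blast
  define d where "d l = c2 l - c1 l" for l
  have dif: "(G' - G) $$ K = (\<Sum>l<n - 1. d l * F (int l) $$ K)" for K
    unfolding c1 c2 d_def by (simp add: fls_nth_sum sum_subtractf algebra_simps)
  have z: "(G' - G) $$ K = 0" if "K \<le> 0" for K
  proof -
    have "zcoeff G' (-K) = zcoeff G (-K)" using a assms(2) that by simp
    thus ?thesis unfolding zcoeff_def by simp
  qed
  have dz: "\<forall>l<n-1. d l = 0"
  proof (rule ccontr)
    assume "\<not> (\<forall>l<n-1. d l = 0)"
    hence ne: "{l. l < n-1 \<and> d l \<noteq> 0} \<noteq> {}" by auto
    define l0 where "l0 = Max {l. l < n-1 \<and> d l \<noteq> 0}"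
    have fin: "finite {l. l < n-1 \<and> d l \<noteq> 0}" by simp
    have l0: "l0 < n - 1" "d l0 \<noteq> 0" using Max_in[OF fin ne] unfolding l0_def by auto
    have mx: "l < n - 1 \<Longrightarrow> d l \<noteq> 0 \<Longrightarrow> l \<le> l0" for l
      unfolding l0_def using fin by (auto intro: Max_ge)
    have "(\<Sum>l<n - 1. d l * F (int l) $$ (- int l0)) = (\<Sum>l<n - 1. if l = l0 then d l0 else 0)"
    proof (rule sum.cong)
      fix l assume "l \<in> {..<n-1}"
      show "d l * F (int l) $$ (- int l0) = (if l = l0 then d l0 else 0)"
      proof (cases "l = l0")
        case True then show ?thesis using fdb_lead[of "int l0"] by simp
      next
        case False
        show ?thesis
        proof (cases "d l = 0")
          case True then show ?thesis using False by simp
        next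
          case nz: False
          hence "l < l0" using mx[of l] \<open>l \<in> {..<n-1}\<close> False by fastforce
          then show ?thesis using False fdb_low[of "- int l0" "int l"] by simp
        qed
      qed
    qed simp
    also have "\<dots> = d l0" using l0 by simp
    finally have "(G' - G) $$ (- int l0) = d l0" using dif by simp
    thus False using z[of "- int l0"] l0 by simp
  qed
  have "(G' - G) $$ K = 0" for K unfolding dif using dz by simp
  hence "G' - G = 0" by (intro fls_eqI) simp
  then show "G' = G" by simp
qed

lemma Hcur_0: "Hcur D h 0 = 1"
  by (rule Hcur_unique) (auto simp: fdb_0 zcoeff_def)

end


context kp begin

lemma zpow0: "zpow 0 = (1::'a fls)" by (simp add: zpow_def)

lemma inA_z: "inA (zpow 1 :: 'a fls)"
  unfolding inA_def zcoeff_def zpow_nth by auto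

lemma S_m1: "(h, a) \<in> Sset D (-1) \<longleftrightarrow> a = zpow 1"
proof -
  have "(h, a) \<in> Sset D (-1) \<longleftrightarrow> inA a \<and> zpow (-1) * a = 1"
    unfolding Sset_def using hM Hcur_0 by simp
  also have "\<dots> \<longleftrightarrow> a = zpow 1"
  proof
    assume "inA a \<and> zpow (-1) * a = 1"
    hence "zpow 1 * (zpow (-1) * a) = zpow 1" by simp
    thus "a = zpow 1" by (simp add: mult.assoc[symmetric] zpow_add[symmetric] zpow0)
  next
    assume "a = zpow 1"
    thus "inA a \<and> zpow (-1) * a = 1" using inA_z by (simp add: zpow_add[symmetric] zpow0)
  qed
  finally show ?thesis .
qed

lemma S_n: "(h, zpow 1) \<in> Sset D (int n - 1) \<longleftrightarrow> zpow (int n) = Hcur D h n"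
proof -
  have ac: "acoef (zpow 1 :: 'a fls) m = 0" if "m \<in> {0..int n - 1}" for m
    using that unfolding acoef_def zcoeff_def zpow_nth by auto
  have "zpow (int n - 1) * zpow 1 = (zpow (int n) :: 'a fls)" by (simp add: zpow_add[symmetric])
  moreover have "nat (int n - 1 + 1) = n" by simp
  ultimately show ?thesis unfolding Sset_def using hM inA_z ac by simp
qed

lemma part1: "h \<in> Sprime D (-1) (int n - 1) \<longleftrightarrow> zpow (int n) = Hcur D h n"
proof
  assume "h \<in> Sprime D (-1) (int n - 1)"
  then obtain a where "(h, a) \<in> Sset D (-1)" "(h, a) \<in> Sset D (int n - 1)"
    unfolding Sprime_def by force
  thus "zpow (int n) = Hcur D h n" using S_m1 S_n by simp
next
  assume "zpow (int n) = Hcur D h n"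
  hence "(h, zpow 1) \<in> Sset D (-1) \<inter> Sset D (int n - 1)" using S_m1 S_n by simp
  thus "h \<in> Sprime D (-1) (int n - 1)" unfolding Sprime_def by force
qed

end


context kp begin

lemma part2:
  assumes n1: "n \<ge> 1" and pM: "phi M = zpow (int n)"
  shows "zpow (int n) = Hcur D h n \<longleftrightarrow> M = pd_plus M"
proof -
  note ld = phi_lead[OF pM]
  define Mp where "Mp = pd_plus M"
  have Mpn: "Mp $$ r = (if r \<le> 0 then M $$ r else 0)" for r
    unfolding Mp_def pd_plus_def by (rule Abs_fls_nth[of "fls_subdegree M"]) auto
  have low: "phi (M - Mp) $$ K = 0" if "K \<le> 0" for K
  proof -
    have "(M - Mp) $$ (-j) * F j $$ K = 0" for j
    proof (cases "j \<le> -1")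
      case True
      then have "K < -j" using that by simp
      then show ?thesis by (simp add: fdb_low)
    next
      case False then show ?thesis by (simp add: Mpn)
    qed
    then show ?thesis unfolding phi_nth by simp
  qed
  have lowc: "phi Mp $$ K = zpow (int n) $$ K" if "K \<le> 0" for K
    using low[OF that] pM phi_diff[of M Mp] by simp
  have form: "phi Mp = F (int n) + (\<Sum>l<n - 1. fls_const (M $$ (- int l)) * F (int l))"
  proof (rule fls_eqI)
    fix K
    let ?A = "int ` ({..<n-1} \<union> {n})"
    have "phi Mp $$ K = (\<Sum>j\<in>?A. Mp $$ (-j) * F j $$ K)"
      unfolding phi_nth
    proof (rule SA_box)
      fix j assume j: "j \<notin> ?A"
      consider "j < 0" | "j = int n - 1" | "int n < j" | "0 \<le> j \<and> j < int n - 1" | "j = int n" by linarith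
      then show "Mp $$ (-j) * F j $$ K = 0"
      proof cases
        case 1 then show ?thesis by (simp add: Mpn)
      next
        case 2 then show ?thesis using ld(3) by (simp add: Mpn)
      next
        case 3 then show ?thesis using ld(1) unfolding lb_def by (simp add: Mpn)
      next
        case 4
        then have "j \<in> ?A" using n1 by (auto simp: image_iff intro!: bexI[of _ "nat j"])
        then show ?thesis using j by simp
      next
        case 5 then show ?thesis using j by simp
      qed
    qed simp
    also have "\<dots> = (\<Sum>l\<in>{..<n-1} \<union> {n}. Mp $$ (- int l) * F (int l) $$ K)"
      by (rule sum.reindex_cong[of int]) auto
    also have "\<dots> = (\<Sum>l<n-1. Mp $$ (- int l) * F (int l) $$ K) + Mp $$ (- int n) * F (int n) $$ K"
      using n1 by (subst sum.union_disjoint) auto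
    also have "\<dots> = (F (int n) + (\<Sum>l<n - 1. fls_const (M $$ (- int l)) * F (int l))) $$ K"
      using ld(2) by (simp add: Mpn fls_nth_sum)
    finally show "phi Mp $$ K = (F (int n) + (\<Sum>l<n - 1. fls_const (M $$ (- int l)) * F (int l))) $$ K" .
  qed
  have H: "Hcur D h n = phi Mp"
  proof (rule Hcur_unique)
    show "\<exists>c. phi Mp = F (int n) + (\<Sum>l<n - 1. fls_const (c l) * F (int l))"
      using form by (intro exI[of _ "\<lambda>l. M $$ (- int l)"])
    show "\<forall>m\<ge>0. zcoeff (phi Mp) m = (if m = int n then 1 else 0)"
      using lowc unfolding zcoeff_def by (auto simp: zpow_nth)
  qed
  show ?thesis unfolding H pM[symmetric] Mp_def[symmetric]
    using phi_inj by blast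
qed

end


definition Pr :: "int \<Rightarrow> nat \<Rightarrow> int" where "Pr k i = (\<Prod>j<i. k - int j)"

lemma Pr_0[simp]: "Pr k 0 = 1" by (simp add: Pr_def)
lemma Pr_Suc_shift: "Pr k (Suc i) = k * Pr (k - 1) i"
  unfolding Pr_def by (subst prod.lessThan_Suc_shift) (simp add: algebra_simps)
lemma Pr_Suc: "Pr k (Suc i) = Pr k i * (k - int i)"
  unfolding Pr_def by simp
lemma Pr_pascal: "Pr k (Suc i) = Pr (k - 1) (Suc i) + (int i + 1) * Pr (k - 1) i"
  unfolding Pr_Suc_shift[of k] Pr_Suc[of "k-1"] by (simp add: algebra_simps)
lemma Pr_zero_left: "Pr 0 (Suc i) = 0" by (simp add: Pr_Suc_shift)

lemma fact_dvd_Pr: "fact i dvd Pr k i"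
proof (induction i arbitrary: k)
  case 0 then show ?case by simp
next
  case (Suc i)
  have fs: "(fact (Suc i) :: int) = (int i + 1) * fact i"
    by (simp only: fact_Suc) simp
  have d: "fact (Suc i) dvd (int i + 1) * Pr k' i" for k'
    unfolding fs by (rule mult_dvd_mono[OF dvd_refl Suc.IH])
  show ?case
  proof (induction k rule: int_induct[where k=0])
    case base then show ?case by (simp only: Pr_zero_left dvd_0_right)
  next
    case (step1 j)
    have e: "Pr (j + 1) (Suc i) = Pr j (Suc i) + (int i + 1) * Pr j i"
      using Pr_pascal[of "j+1" i] by simp
    show ?case unfolding e by (rule dvd_add[OF step1(2) d])
  next
    case (step2 j)
    have e: "Pr (j - 1) (Suc i) = Pr j (Suc i) - (int i + 1) * Pr (j - 1) i"
      using Pr_pascal[of j i] by simp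
    show ?case unfolding e by (rule dvd_diff[OF step2(2) d])
  qed
qed

lemma ibinom_Pr: "fact i * ibinom k i = Pr k i"
  unfolding ibinom_def Pr_def[symmetric] using fact_dvd_Pr[of i k] by (rule dvd_mult_div_cancel)

lemma ibinom_0[simp]: "ibinom k 0 = 1" unfolding ibinom_def by simp
lemma ibinom_0_left: "ibinom 0 i = (if i = 0 then 1 else 0)"
proof (cases i)
  case 0 then show ?thesis by simp
next
  case (Suc j)
  have "fact i * ibinom 0 i = 0" unfolding ibinom_Pr Suc by (rule Pr_zero_left)
  then show ?thesis using Suc by simp
qed
lemma ibinom_pascal: "ibinom k (Suc i) = ibinom (k - 1) (Suc i) + ibinom (k - 1) i"
proof -
  have fs: "(fact (Suc i) :: int) = (int i + 1) * fact i"
    by (simp only: fact_Suc) simp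
  have "fact (Suc i) * ibinom k (Suc i) = Pr k (Suc i)" by (rule ibinom_Pr)
  also have "\<dots> = fact (Suc i) * ibinom (k - 1) (Suc i) + (int i + 1) * (fact i * ibinom (k - 1) i)"
    unfolding ibinom_Pr by (rule Pr_pascal)
  also have "\<dots> = fact (Suc i) * (ibinom (k - 1) (Suc i) + ibinom (k - 1) i)"
    unfolding fs by (simp only: algebra_simps)
  finally show ?thesis by (metis fact_nonzero mult_left_cancel)
qed



context kp begin

definition LS :: "('b \<Rightarrow> 'a fls) \<Rightarrow> 'a fls" where
  "LS G = Abs_fls (\<lambda>K. Sum_any (\<lambda>b. G b $$ K))"

definition good :: "('b \<Rightarrow> 'a fls) \<Rightarrow> int \<Rightarrow> bool" where
  "good G N \<longleftrightarrow> (\<forall>b. lb (G b) N) \<and> (\<forall>K. finite {b. G b $$ K \<noteq> 0})"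

lemma LS_nth: assumes "good G N" shows "LS G $$ K = Sum_any (\<lambda>b. G b $$ K)"
proof -
  have "LS G $$ K = (\<lambda>K. Sum_any (\<lambda>b. G b $$ K)) K"
    unfolding LS_def
    by (rule Abs_fls_nth[of N]) (use assms in \<open>auto simp: good_def lb_def\<close>)
  thus ?thesis by simp
qed

lemma lb_LS: assumes "good G N" shows "lb (LS G) N"
  unfolding lb_def LS_nth[OF assms] using assms by (auto simp: good_def lb_def)

lemma T_LS_aux1:
  assumes g: "good G N"
  shows "finite (\<Union>K'\<in>{N..K+1}. {b. G b $$ K' \<noteq> 0})"
  using g by (auto simp: good_def)

lemma T_LS_aux2:
  assumes g: "good G N" and "K' \<le> K + 1" and "b \<notin> (\<Union>K''\<in>{N..K+1}. {b. G b $$ K'' \<noteq> 0})"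
  shows "G b $$ K' = 0"
  using assms unfolding good_def lb_def by (cases "K' < N") auto

lemma good_T:
  assumes g: "good G N"
  shows "good (\<lambda>b. T (G b)) (N - 1)"
  unfolding good_def
proof (intro conjI allI)
  fix b show "lb (T (G b)) (N - 1)" using g T_lb_fwd(1) by (auto simp: good_def)
next
  fix K
  show "finite {b. T (G b) $$ K \<noteq> 0}"
  proof (rule finite_subset[OF _ T_LS_aux1[OF g, of K]])
    show "{b. T (G b) $$ K \<noteq> 0} \<subseteq> (\<Union>K'\<in>{N..K+1}. {b. G b $$ K' \<noteq> 0})"
    proof
      fix b assume b: "b \<in> {b. T (G b) $$ K \<noteq> 0}"
      show "b \<in> (\<Union>K'\<in>{N..K+1}. {b. G b $$ K' \<noteq> 0})"
      proof (rule ccontr)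
        assume nb: "b \<notin> (\<Union>K'\<in>{N..K+1}. {b. G b $$ K' \<noteq> 0})"
        have lbb: "lb (G b) N" using g by (auto simp: good_def)
        have z: "G b $$ K' = 0" if "K' \<le> K + 1" for K' using T_LS_aux2[OF g that nb] .
        have "T (G b) $$ K = 0"
          unfolding T_nth[OF lbb] by (simp add: z)
        thus False using b by simp
      qed
    qed
  qed
qed

lemma T_LS:
  assumes g: "good G N"
  shows "T (LS G) = LS (\<lambda>b. T (G b))"
proof (rule fls_eqI)
  fix K
  define B where "B = (\<Union>K'\<in>{N..K+1}. {b. G b $$ K' \<noteq> 0})"
  have aux1: "finite B" unfolding B_def by (rule T_LS_aux1[OF g])
  have aux2: "G b $$ K' = 0" if "K' \<le> K + 1" "b \<notin> B" for K' b
    using T_LS_aux2[OF g that(1)] that(2) unfolding B_def by blast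
  have sa: "Sum_any (\<lambda>b. G b $$ K') = (\<Sum>b\<in>B. G b $$ K')" if "K' \<le> K + 1" for K'
    by (rule SA_box[OF aux1]) (rule aux2[OF that])
  have lbb: "lb (G b) N" for b using g by (auto simp: good_def)
  have "T (LS G) $$ K = D (LS G $$ K) + LS G $$ (K + 1) + (\<Sum>t\<in>{1..K-N}. h $$ t * LS G $$ (K - t))"
    by (rule T_nth[OF lb_LS[OF g]])
  also have "\<dots> = D (\<Sum>b\<in>B. G b $$ K) + (\<Sum>b\<in>B. G b $$ (K+1)) + (\<Sum>t\<in>{1..K-N}. h $$ t * (\<Sum>b\<in>B. G b $$ (K - t)))"
    by (simp add: LS_nth[OF g] sa)
  also have "\<dots> = (\<Sum>b\<in>B. D (G b $$ K) + G b $$ (K+1) + (\<Sum>t\<in>{1..K-N}. h $$ t * G b $$ (K - t)))"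
  proof -
    have "(\<Sum>t\<in>{1..K-N}. h $$ t * (\<Sum>b\<in>B. G b $$ (K - t))) = (\<Sum>t\<in>{1..K-N}. \<Sum>b\<in>B. h $$ t * G b $$ (K - t))"
      by (simp only: sum_distrib_left)
    also have "\<dots> = (\<Sum>b\<in>B. \<Sum>t\<in>{1..K-N}. h $$ t * G b $$ (K - t))"
      by (rule sum.swap)
    finally show ?thesis by (simp only: D_sum sum.distrib)
  qed
  also have "\<dots> = (\<Sum>b\<in>B. T (G b) $$ K)"
    by (simp add: T_nth[OF lbb])
  also have "\<dots> = Sum_any (\<lambda>b. T (G b) $$ K)"
  proof (rule SA_box[symmetric, OF aux1])
    fix b assume "b \<notin> B"
    then have z: "G b $$ K' = 0" if "K' \<le> K + 1" for K' using aux2 that by blast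
    then show "T (G b) $$ K = 0" unfolding T_nth[OF lbb] by (simp add: z)
  qed
  also have "\<dots> = LS (\<lambda>b. T (G b)) $$ K" by (rule LS_nth[OF good_T[OF g], symmetric])
  finally show "T (LS G) $$ K = LS (\<lambda>b. T (G b)) $$ K" .
qed

end


context kp begin

definition Vt :: "'a fls \<Rightarrow> int \<Rightarrow> int \<times> nat \<Rightarrow> 'a fls" where
  "Vt Q k b = fls_const (of_int (ibinom k (snd b)) * (D ^^ snd b) (Q $$ (- fst b))) * F (k - int (snd b) + fst b)"

definition V :: "'a fls \<Rightarrow> int \<Rightarrow> 'a fls" where "V Q k = LS (Vt Q k)"

lemma Vt_nth: "Vt Q k (l, i) $$ K = of_int (ibinom k i) * (D ^^ i) (Q $$ (- l)) * F (k - int i + l) $$ K"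
  unfolding Vt_def by simp

lemma Fz: "F j $$ K \<noteq> 0 \<Longrightarrow> -j \<le> K" using fdb_low by force
lemma Qz: "(D ^^ m) (Q $$ (- l)) \<noteq> 0 \<Longrightarrow> l \<le> - fls_subdegree Q"
proof -
  assume a: "(D ^^ m) (Q $$ (- l)) \<noteq> 0"
  hence "Q $$ (- l) \<noteq> 0" by auto
  hence "fls_subdegree Q \<le> - l" by (rule fls_subdegree_leI)
  thus ?thesis by simp
qed

lemma Vt_nz:
  assumes "Vt Q k (l, i) $$ K \<noteq> 0"
  shows "l \<le> - fls_subdegree Q" "- k - K \<le> l" "int i \<le> k - fls_subdegree Q + K"
proof -
  have a: "(D ^^ i) (Q $$ (- l)) \<noteq> 0" "F (k - int i + l) $$ K \<noteq> 0"
    using assms unfolding Vt_nth by auto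
  show "l \<le> - fls_subdegree Q" using Qz[OF a(1)] .
  have "- (k - int i + l) \<le> K" using Fz[OF a(2)] .
  then show "- k - K \<le> l" "int i \<le> k - fls_subdegree Q + K" using Qz[OF a(1)] by auto
qed

lemma good_Vt: "good (Vt Q k) (- (k - fls_subdegree Q))"
  unfolding good_def
proof (intro conjI allI)
  fix b :: "int \<times> nat"
  obtain l i where b: "b = (l, i)" by fastforce
  show "lb (Vt Q k b) (- (k - fls_subdegree Q))"
    unfolding lb_def b using Vt_nz(3)[of Q k l i] by force
next
  fix K
  show "finite {b. Vt Q k b $$ K \<noteq> 0}"
  proof (rule finite_subset[of _ "{-k-K..- fls_subdegree Q} \<times> {0..nat (k - fls_subdegree Q + K)}"])
    show "{b. Vt Q k b $$ K \<noteq> 0} \<subseteq> {-k-K..- fls_subdegree Q} \<times> {0..nat (k - fls_subdegree Q + K)}"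
    proof
      fix b assume "b \<in> {b. Vt Q k b $$ K \<noteq> 0}"
      moreover obtain l i where b: "b = (l, i)" by fastforce
      ultimately have "Vt Q k (l, i) $$ K \<noteq> 0" by simp
      from Vt_nz[OF this] show "b \<in> {-k-K..- fls_subdegree Q} \<times> {0..nat (k - fls_subdegree Q + K)}"
        unfolding b by auto
    qed
  qed simp
qed

lemma V_nth: "V Q k $$ K = Sum_any (\<lambda>b. Vt Q k b $$ K)"
  unfolding V_def by (rule LS_nth[OF good_Vt])

lemma T_F: "T (F j) = F (j + 1)" by (simp add: fdb_step)

lemma T_Vt: "T (Vt Q (k - 1) (l, i)) =
   fls_const (of_int (ibinom (k-1) i) * (D ^^ Suc i) (Q $$ (- l))) * F (k - 1 - int i + l) +
   fls_const (of_int (ibinom (k-1) i) * (D ^^ i) (Q $$ (- l))) * F (k - int i + l)"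
proof -
  have e: "k - 1 - int i + l + 1 = k - int i + l" by simp
  show ?thesis unfolding Vt_def by (simp add: T_const D_of_int_mult T_F e)
qed

lemma V_step: "T (V Q (k - 1)) = V Q k"
proof (rule fls_eqI)
  fix K
  let ?q = "- fls_subdegree Q"
  define M0 where "M0 = nat (k + ?q + K)"
  define Lb where "Lb = {-k-K..?q}"
  define A where "A = (\<lambda>l i. of_int (ibinom (k-1) i) * (D ^^ Suc i) (Q $$ (- l)) * F (k - 1 - int i + l) $$ K)"
  define B where "B = (\<lambda>l i. of_int (ibinom (k-1) i) * (D ^^ i) (Q $$ (- l)) * F (k - int i + l) $$ K)"
  define C where "C = (\<lambda>l i. of_int (ibinom k i) * (D ^^ i) (Q $$ (- l)) * F (k - int i + l) $$ K)"
  have Tn: "T (Vt Q (k - 1) (l, i)) $$ K = A l i + B l i" for l i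
    unfolding T_Vt A_def B_def by simp
  have Cn: "Vt Q k (l, i) $$ K = C l i" for l i unfolding Vt_nth C_def ..
  have Az: "A l i = 0" if "l \<notin> Lb \<or> i > M0" for l i
  proof (rule ccontr)
    assume "A l i \<noteq> 0"
    hence a: "(D ^^ Suc i) (Q $$ (- l)) \<noteq> 0" "F (k - 1 - int i + l) $$ K \<noteq> 0"
      unfolding A_def by auto
    have "l \<le> ?q" using Qz[OF a(1)] .
    moreover have "- (k - 1 - int i + l) \<le> K" using Fz[OF a(2)] .
    ultimately show False using that unfolding Lb_def M0_def by auto
  qed
  have Bz: "B l i = 0" if "l \<notin> Lb \<or> i > M0" for l i
  proof (rule ccontr)
    assume "B l i \<noteq> 0"
    hence a: "(D ^^ i) (Q $$ (- l)) \<noteq> 0" "F (k - int i + l) $$ K \<noteq> 0"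
      unfolding B_def by auto
    have "l \<le> ?q" using Qz[OF a(1)] .
    moreover have "- (k - int i + l) \<le> K" using Fz[OF a(2)] .
    ultimately show False using that unfolding Lb_def M0_def by auto
  qed
  have Cz: "C l i = 0" if "l \<notin> Lb \<or> i > M0" for l i
  proof (rule ccontr)
    assume "C l i \<noteq> 0"
    hence a: "(D ^^ i) (Q $$ (- l)) \<noteq> 0" "F (k - int i + l) $$ K \<noteq> 0"
      unfolding C_def by auto
    have "l \<le> ?q" using Qz[OF a(1)] .
    moreover have "- (k - int i + l) \<le> K" using Fz[OF a(2)] .
    ultimately show False using that unfolding Lb_def M0_def by auto
  qed
  have finLb: "finite Lb" unfolding Lb_def by simp
  have "T (V Q (k - 1)) $$ K = LS (\<lambda>b. T (Vt Q (k - 1) b)) $$ K"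
    unfolding V_def by (simp add: T_LS[OF good_Vt])
  also have "\<dots> = Sum_any (\<lambda>b. T (Vt Q (k - 1) b) $$ K)"
    by (rule LS_nth[OF good_T[OF good_Vt]])
  also have "\<dots> = (\<Sum>b\<in>Lb \<times> {0..Suc M0}. T (Vt Q (k - 1) b) $$ K)"
  proof (rule SA_box)
    fix b :: "int \<times> nat" assume "b \<notin> Lb \<times> {0..Suc M0}"
    moreover obtain l i where b: "b = (l, i)" by fastforce
    ultimately have "l \<notin> Lb \<or> i > M0" by auto
    then show "T (Vt Q (k - 1) b) $$ K = 0" unfolding b Tn using Az Bz by simp
  qed (simp add: finLb)
  also have "\<dots> = (\<Sum>l\<in>Lb. \<Sum>i\<in>{0..Suc M0}. A l i + B l i)"
    unfolding sum.cartesian_product by (rule sum.cong) (auto simp: Tn)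
  also have "\<dots> = (\<Sum>l\<in>Lb. \<Sum>i\<in>{0..Suc M0}. C l i)"
  proof (rule sum.cong[OF refl])
    fix l
    have "(\<Sum>i\<in>{0..Suc M0}. A l i + B l i) = (\<Sum>i\<in>{0..Suc M0}. A l i) + (\<Sum>i\<in>{0..Suc M0}. B l i)"
      by (rule sum.distrib)
    also have "(\<Sum>i\<in>{0..Suc M0}. A l i) = (\<Sum>i\<in>{0..M0}. A l i)"
      using Az[of l "Suc M0"] by (simp add: sum.atLeast0_atMost_Suc)
    also have "(\<Sum>i\<in>{0..Suc M0}. B l i) = B l 0 + (\<Sum>i\<in>{0..M0}. B l (Suc i))"
      by (simp only: sum.atLeast0_atMost_Suc_shift comp_def)
    also have "(\<Sum>i\<in>{0..M0}. A l i) + (B l 0 + (\<Sum>i\<in>{0..M0}. B l (Suc i))) =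
        C l 0 + (\<Sum>i\<in>{0..M0}. C l (Suc i))"
    proof -
      have "B l 0 = C l 0" unfolding B_def C_def by simp
      moreover have "A l i + B l (Suc i) = C l (Suc i)" for i
      proof -
        have e: "k - 1 - int i + l = k - int (Suc i) + l" by simp
        show ?thesis unfolding A_def B_def C_def e ibinom_pascal[of k i]
          by (simp add: algebra_simps)
      qed
      ultimately show ?thesis by (simp add: sum.distrib[symmetric])
    qed
    also have "\<dots> = (\<Sum>i\<in>{0..Suc M0}. C l i)"
      by (simp only: sum.atLeast0_atMost_Suc_shift comp_def)
    finally show "(\<Sum>i\<in>{0..Suc M0}. A l i + B l i) = (\<Sum>i\<in>{0..Suc M0}. C l i)" .
  qed
  also have "\<dots> = (\<Sum>b\<in>Lb \<times> {0..Suc M0}. Vt Q k b $$ K)"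
    unfolding sum.cartesian_product by (rule sum.cong) (auto simp: Cn)
  also have "\<dots> = Sum_any (\<lambda>b. Vt Q k b $$ K)"
  proof (rule SA_box[symmetric])
    fix b :: "int \<times> nat" assume "b \<notin> Lb \<times> {0..Suc M0}"
    moreover obtain l i where b: "b = (l, i)" by fastforce
    ultimately have "l \<notin> Lb \<or> i > M0" by auto
    then show "Vt Q k b $$ K = 0" unfolding b Cn using Cz by simp
  qed (simp add: finLb)
  also have "\<dots> = V Q k $$ K" by (rule V_nth[symmetric])
  finally show "T (V Q (k - 1)) $$ K = V Q k $$ K" .
qed

lemma V_0: "V Q 0 = phi Q"
proof (rule fls_eqI)
  fix K
  let ?q = "- fls_subdegree Q"
  define S where "S = {-K..?q}"
  have "V Q 0 $$ K = (\<Sum>b\<in>(\<lambda>l. (l, 0::nat)) ` S. Vt Q 0 b $$ K)"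
    unfolding V_nth
  proof (rule SA_box)
    fix b :: "int \<times> nat" assume nb: "b \<notin> (\<lambda>l. (l, 0::nat)) ` S"
    obtain l i where b: "b = (l, i)" by fastforce
    show "Vt Q 0 b $$ K = 0"
    proof (cases "i = 0")
      case True
      hence "l \<notin> S" using nb b by auto
      then show ?thesis unfolding b using Vt_nz[of Q 0 l i K] True unfolding S_def by force
    next
      case False
      then show ?thesis unfolding b Vt_nth by (simp add: ibinom_0_left)
    qed
  qed (simp add: S_def)
  also have "\<dots> = (\<Sum>l\<in>S. Vt Q 0 (l, 0) $$ K)"
    by (rule sum.reindex_cong[of "\<lambda>l. (l, 0::nat)"]) (auto simp: inj_on_def)
  also have "\<dots> = (\<Sum>l\<in>S. Q $$ (- l) * F l $$ K)"
    unfolding Vt_nth by simp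
  also have "\<dots> = phi Q $$ K" unfolding S_def by (rule phi_box[OF ord_bound, symmetric])
  finally show "V Q 0 $$ K = phi Q $$ K" .
qed

lemma V_U:
  assumes "phi Q = zpow a"
  shows "V Q k = zpow a * F k"
proof (induction k rule: int_induct[where k=0])
  case base then show ?case using assms V_0 fdb_0 by simp
next
  case (step1 i)
  have "V Q (i + 1) = T (V Q i)" using V_step[of Q "i+1"] by simp
  also have "\<dots> = zpow a * F (i + 1)" using step1(2) T_zpow T_F by simp
  finally show ?case .
next
  case (step2 i)
  have "T (V Q (i - 1)) = T (zpow a * F (i - 1))"
    using V_step[of Q i] step2(2) T_zpow T_F[of "i-1"] by simp
  then show ?case by (rule T_inj)
qed

end


context kp begin

definition mterm :: "'a fls \<Rightarrow> 'a fls \<Rightarrow> int \<Rightarrow> int \<times> nat \<Rightarrow> 'a" where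
  "mterm P Q r p = pdcoeff P (fst p) * of_int (ibinom (fst p) (snd p)) *
          (D ^^ snd p) (pdcoeff Q (- r - fst p + int (snd p)))"

lemma mterm_nz:
  assumes "mterm P Q r (k, i) \<noteq> 0"
  shows "k \<le> - fls_subdegree P" "fls_subdegree Q \<le> r + k - int i"
proof -
  have a: "P $$ (-k) \<noteq> 0" "(D ^^ i) (Q $$ (r + k - int i)) \<noteq> 0"
    using assms unfolding mterm_def pdcoeff_def by (auto simp: algebra_simps)
  show "k \<le> - fls_subdegree P" using fls_subdegree_leI[OF a(1)] by simp
  have "Q $$ (r + k - int i) \<noteq> 0" using a(2) by auto
  then show "fls_subdegree Q \<le> r + k - int i" by (rule fls_subdegree_leI)
qed

lemma pd_mult_nth: "pd_mult D P Q $$ r = Sum_any (mterm P Q r)"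
proof -
  let ?S = "\<lambda>r. {p :: int \<times> nat. pdcoeff P (fst p) \<noteq> 0 \<and> pdcoeff Q (- r - fst p + int (snd p)) \<noteq> 0}"
  have sub: "?S r \<subseteq> {fls_subdegree Q - r..- fls_subdegree P} \<times> {0..nat (r - fls_subdegree P - fls_subdegree Q)}" for r
  proof
    fix p assume "p \<in> ?S r"
    moreover obtain k i where p: "p = (k, i)" by fastforce
    ultimately have a: "P $$ (-k) \<noteq> 0" "Q $$ (r + k - int i) \<noteq> 0"
      unfolding pdcoeff_def by (auto simp: algebra_simps)
    have "fls_subdegree P \<le> -k" "fls_subdegree Q \<le> r + k - int i"
      using fls_subdegree_leI[OF a(1)] fls_subdegree_leI[OF a(2)] by auto
    then show "p \<in> {fls_subdegree Q - r..- fls_subdegree P} \<times> {0..nat (r - fls_subdegree P - fls_subdegree Q)}"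
      unfolding p by auto
  qed
  have fin: "finite (?S r)" for r by (rule finite_subset[OF sub]) simp
  have emp: "?S r = {}" if "r < fls_subdegree P + fls_subdegree Q" for r
    using sub[of r] that by force
  have pm: "pd_mult D P Q = Abs_fls (\<lambda>r. \<Sum>p\<in>?S r. mterm P Q r p)"
    by (simp add: pd_mult_def mterm_def)
  have "pd_mult D P Q $$ r = (\<lambda>r. \<Sum>p\<in>?S r. mterm P Q r p) r"
    unfolding pm
  proof (rule Abs_fls_nth[of "fls_subdegree P + fls_subdegree Q"], intro allI impI)
    fix k assume "k < fls_subdegree P + fls_subdegree Q"
    then have "?S k = {}" by (rule emp)
    then show "(\<Sum>p\<in>?S k. mterm P Q k p) = 0" by (simp only: sum.empty)
  qed
  also have "\<dots> = Sum_any (mterm P Q r)"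
    by (rule SA_box[symmetric, OF fin]) (auto simp: mterm_def)
  finally show ?thesis .
qed

lemma pd_mult_low: "r < fls_subdegree P + fls_subdegree Q \<Longrightarrow> pd_mult D P Q $$ r = 0"
proof -
  assume r: "r < fls_subdegree P + fls_subdegree Q"
  have "mterm P Q r p = 0" for p
  proof (rule ccontr)
    obtain k i where p: "p = (k, i)" by fastforce
    assume "mterm P Q r p \<noteq> 0"
    from mterm_nz[OF this[unfolded p]] show False using r by auto
  qed
  then show ?thesis unfolding pd_mult_nth by simp
qed

lemma key:
  assumes pQ: "phi Q = zpow a"
  shows "phi (pd_mult D P Q) = zpow a * phi P"
proof (rule fls_eqI)
  fix K
  let ?p = "- fls_subdegree P" and ?q = "- fls_subdegree Q"
  let ?R = "pd_mult D P Q"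
  define Jb where "Jb = {-K..?p + ?q}"
  define Kb where "Kb = {-K-?q..?p}"
  define Ib where "Ib = {0..nat (?p + ?q + K)}"
  define Lb where "Lb = {-K-?p..?q}"
  define Y where "Y = (\<lambda>j k i. P $$ (-k) * of_int (ibinom k i) * (D ^^ i) (Q $$ (- (j - k + int i))))"
  have Ym: "mterm P Q (-j) (k, i) = Y j k i" for j k i
    unfolding mterm_def Y_def pdcoeff_def by (simp add: algebra_simps)
  have Ynz: "k \<le> ?p \<and> j - k + int i \<le> ?q" if "Y j k i \<noteq> 0" for j k i
    using mterm_nz[of P Q "-j" k i] that unfolding Ym by auto
  have fins: "finite Jb" "finite Kb" "finite Ib" "finite Lb"
    unfolding Jb_def Kb_def Ib_def Lb_def by auto
  have "phi ?R $$ K = (\<Sum>j\<in>Jb. ?R $$ (-j) * F j $$ K)"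
    unfolding Jb_def by (rule phi_box) (auto intro!: pd_mult_low)
  also have "\<dots> = (\<Sum>j\<in>Jb. (\<Sum>b\<in>Kb \<times> Ib. Y j (fst b) (snd b)) * F j $$ K)"
  proof (rule sum.cong[OF refl])
    fix j assume j: "j \<in> Jb"
    have "?R $$ (-j) = (\<Sum>b\<in>Kb \<times> Ib. mterm P Q (-j) b)"
      unfolding pd_mult_nth
    proof (rule SA_box)
      fix b :: "int \<times> nat" assume nb: "b \<notin> Kb \<times> Ib"
      obtain k i where b: "b = (k, i)" by fastforce
      show "mterm P Q (-j) b = 0"
      proof (rule ccontr)
        assume "mterm P Q (-j) b \<noteq> 0"
        hence "Y j k i \<noteq> 0" unfolding b Ym .
        from Ynz[OF this] j nb show False unfolding b Jb_def Kb_def Ib_def by auto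
      qed
    qed (use fins in simp)
    also have "\<dots> = (\<Sum>b\<in>Kb \<times> Ib. Y j (fst b) (snd b))"
      by (rule sum.cong[OF refl]) (metis Ym prod.collapse)
    finally show "?R $$ (-j) * F j $$ K = (\<Sum>b\<in>Kb \<times> Ib. Y j (fst b) (snd b)) * F j $$ K"
      by simp
  qed
  also have "\<dots> = (\<Sum>j\<in>Jb. \<Sum>b\<in>Kb \<times> Ib. Y j (fst b) (snd b) * F j $$ K)"
    by (simp add: sum_distrib_right)
  also have "\<dots> = (\<Sum>x\<in>Jb \<times> (Kb \<times> Ib). Y (fst x) (fst (snd x)) (snd (snd x)) * F (fst x) $$ K)"
    by (simp add: sum.cartesian_product split_def)
  also have "\<dots> = Sum_any (\<lambda>x. Y (fst x) (fst (snd x)) (snd (snd x)) * F (fst x) $$ K)"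
  proof (rule SA_box[symmetric])
    fix x :: "int \<times> int \<times> nat" assume nx: "x \<notin> Jb \<times> (Kb \<times> Ib)"
    obtain j k i where x: "x = (j, k, i)" by (metis prod.exhaust)
    show "Y (fst x) (fst (snd x)) (snd (snd x)) * F (fst x) $$ K = 0"
    proof (rule ccontr)
      assume "Y (fst x) (fst (snd x)) (snd (snd x)) * F (fst x) $$ K \<noteq> 0"
      hence a: "Y j k i \<noteq> 0" "F j $$ K \<noteq> 0" unfolding x by auto
      from Ynz[OF a(1)] Fz[OF a(2)] nx show False
        unfolding x Jb_def Kb_def Ib_def by auto
    qed
  qed (use fins in simp)
  also have "\<dots> = Sum_any (\<lambda>x. P $$ (- fst x) * Vt Q (fst x) (snd x) $$ K)"
  proof (rule Sum_any.reindex_cong[of "\<lambda>x. (fst x - int (snd (snd x)) + fst (snd x), fst x, snd (snd x))"])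
    let ?r = "\<lambda>x::int \<times> int \<times> nat. (fst x - int (snd (snd x)) + fst (snd x), fst x, snd (snd x))"
    let ?s = "\<lambda>y::int \<times> int \<times> nat. (fst (snd y), fst y - fst (snd y) + int (snd (snd y)), snd (snd y))"
    show "bij ?r"
      by (rule o_bij[of ?s]) (auto simp: fun_eq_iff)
    show "(\<lambda>x. Y (fst x) (fst (snd x)) (snd (snd x)) * F (fst x) $$ K) \<circ> ?r =
          (\<lambda>x. P $$ (- fst x) * Vt Q (fst x) (snd x) $$ K)"
    proof
      fix x :: "int \<times> int \<times> nat"
      obtain k l i where x: "x = (k, l, i)" by (metis prod.exhaust)
      show "((\<lambda>x. Y (fst x) (fst (snd x)) (snd (snd x)) * F (fst x) $$ K) \<circ> ?r) x =
          P $$ (- fst x) * Vt Q (fst x) (snd x) $$ K"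
        unfolding x by (simp add: Y_def Vt_nth algebra_simps)
    qed
  qed
  also have "\<dots> = (\<Sum>x\<in>Kb \<times> (Lb \<times> Ib). P $$ (- fst x) * Vt Q (fst x) (snd x) $$ K)"
  proof (rule SA_box)
    fix x :: "int \<times> int \<times> nat" assume nx: "x \<notin> Kb \<times> (Lb \<times> Ib)"
    obtain k l i where x: "x = (k, l, i)" by (metis prod.exhaust)
    show "P $$ (- fst x) * Vt Q (fst x) (snd x) $$ K = 0"
    proof (rule ccontr)
      assume "P $$ (- fst x) * Vt Q (fst x) (snd x) $$ K \<noteq> 0"
      hence a: "P $$ (-k) \<noteq> 0" "Vt Q k (l, i) $$ K \<noteq> 0" unfolding x by auto
      have "k \<le> ?p" using fls_subdegree_leI[OF a(1)] by simp
      with Vt_nz[OF a(2)] nx show False unfolding x Kb_def Lb_def Ib_def by auto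
    qed
  qed (use fins in simp)
  also have "\<dots> = (\<Sum>k\<in>Kb. P $$ (-k) * (\<Sum>b\<in>Lb \<times> Ib. Vt Q k b $$ K))"
    unfolding sum_distrib_left sum.cartesian_product by (rule sum.cong) auto
  also have "\<dots> = (\<Sum>k\<in>Kb. P $$ (-k) * V Q k $$ K)"
  proof (rule sum.cong[OF refl])
    fix k assume k: "k \<in> Kb"
    have "V Q k $$ K = (\<Sum>b\<in>Lb \<times> Ib. Vt Q k b $$ K)"
      unfolding V_nth
    proof (rule SA_box)
      fix b :: "int \<times> nat" assume nb: "b \<notin> Lb \<times> Ib"
      obtain l i where b: "b = (l, i)" by fastforce
      show "Vt Q k b $$ K = 0"
      proof (rule ccontr)
        assume "Vt Q k b $$ K \<noteq> 0"
        from Vt_nz[OF this[unfolded b]] k nb show False unfolding b Kb_def Lb_def Ib_def by auto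
      qed
    qed (use fins in simp)
    then show "P $$ (-k) * (\<Sum>b\<in>Lb \<times> Ib. Vt Q k b $$ K) = P $$ (-k) * V Q k $$ K" by simp
  qed
  also have "\<dots> = Sum_any (\<lambda>k. P $$ (-k) * V Q k $$ K)"
  proof (rule SA_box[symmetric])
    fix k assume nk: "k \<notin> Kb"
    show "P $$ (-k) * V Q k $$ K = 0"
    proof (cases "k > ?p")
      case True then show ?thesis by simp
    next
      case False
      hence kl: "k < -K-?q" using nk unfolding Kb_def by auto
      have "Vt Q k b $$ K = 0" for b
      proof (rule ccontr)
        obtain l i where b: "b = (l, i)" by fastforce
        assume "Vt Q k b $$ K \<noteq> 0"
        from Vt_nz(3)[OF this[unfolded b]] kl show False by auto
      qed
      then show ?thesis unfolding V_nth by simp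
    qed
  qed (use fins in simp)
  also have "\<dots> = Sum_any (\<lambda>k. P $$ (-k) * F k $$ (K + a))"
    using V_U[OF pQ] by (simp add: zpow_mult)
  also have "\<dots> = (zpow a * phi P) $$ K"
    by (simp add: zpow_mult phi_nth)
  finally show "phi ?R $$ K = (zpow a * phi P) $$ K" .
qed

lemma phi_1: "phi 1 = 1"
proof (rule fls_eqI)
  fix K
  have "phi 1 $$ K = Sum_any (\<lambda>j. if j = 0 then F j $$ K else 0)"
    unfolding phi_nth by (rule Sum_any.cong) simp
  also have "\<dots> = 1 $$ K" using fdb_0 by simp
  finally show "phi 1 $$ K = 1 $$ K" .
qed

lemma phi_pow: "phi (pd_pow D L n) = zpow (int n)"
proof (induction n)
  case 0 then show ?case by (simp add: pd_pow_def phi_1 zpow0)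
next
  case (Suc n)
  have "pd_pow D L (Suc n) = pd_mult D L (pd_pow D L n)" by (simp add: pd_pow_def)
  hence "phi (pd_pow D L (Suc n)) = zpow (int n) * phi L" using key[OF Suc] by simp
  also have "\<dots> = zpow (int (Suc n))" by (simp add: phi_L zpow_add[symmetric] add.commute)
  finally show ?case .
qed

end

theorem mainTheorem4:
  fixes D :: "'a::{comm_ring_1, ring_char_0} \<Rightarrow> 'a" and h :: "'a fls" and n :: nat
  assumes "is_derivation D" and "n \<ge> 1" and "inM h"
  shows "(h \<in> Sprime D (-1) (int n - 1) \<longleftrightarrow> zpow (int n) = Hcur D h n) \<and>
         (zpow (int n) = Hcur D h n \<longleftrightarrow>
            pd_pow D (LaxOp D h) n = pd_plus (pd_pow D (LaxOp D h) n))"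
proof -
  interpret kp D h using assms(1,3) by unfold_locales
  have "phi (pd_pow D (LaxOp D h) n) = zpow (int n)" using phi_pow unfolding L_def .
  then show ?thesis using part1 part2[OF assms(2)] by blast
qed


end
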